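(* For each $n\ge1$ and each $k\ge0$, the number of plane trees with $n$ edges and exactly $k$ young leaves equals the number of Dyck paths of length $2n$ with exactly $k$ peaks at even height (a peak $UD$ being at height $h$ if its top point has $y$-coordinate $h$).
   Context: A plane tree is a rooted tree in which the children of each vertex are linearly ordered (left to right). A leaf is a vertex with no children; by convention the tree consisting of a single vertex (no edges) has no leaves. A leaf is a young leaf if it is not the leftmost child of its parent. A Dyck path of length $2n$ is a lattice path from $(0,0)$ to $(2n,0)$ with steps $U=(1,1)$, $D=(1,-1)$ never going below the $x$-axis; a peak is an occurrence of consecutive steps $UD$. *)

theory Defs
  imports Main
begin

datatype ptree = Node "ptree list"

fun edges :: "ptree \<Rightarrow> nat" where
  "edges (Node cs) = (\<Sum>c\<leftarrow>cs. Suc (edges c))"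

fun is_leaf :: "ptree \<Rightarrow> bool" where
  "is_leaf (Node cs) = (cs = [])"

text \<open>Young leaves: leaf children that are not the leftmost child of their parent
  (i.e. child positions i \<ge> 1), counted over all vertices.\<close>
fun young_leaves :: "ptree \<Rightarrow> nat" where
  "young_leaves (Node cs) =
     card {i. 1 \<le> i \<and> i < length cs \<and> is_leaf (cs ! i)} + (\<Sum>c\<leftarrow>cs. young_leaves c)"

text \<open>Dyck paths as step lists: True = U = (1,1), False = D = (1,-1).\<close>
definition height :: "bool list \<Rightarrow> int" where
  "height w = int (length (filter id w)) - int (length (filter Not w))"

definition dyck_path :: "nat \<Rightarrow> bool list \<Rightarrow> bool" where
  "dyck_path n w \<longleftrightarrow> length w = 2 * n \<and> height w = 0 \<and>
     (\<forall>j \<le> length w. height (take j w) \<ge> 0)"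

text \<open>A peak is an occurrence of UD at positions i, i+1; its top point is the end of the
  U step, at height (height of the first i+1 steps).\<close>
definition even_peaks :: "bool list \<Rightarrow> nat" where
  "even_peaks w = card {i. Suc i < length w \<and> w ! i \<and> \<not> w ! Suc i \<and>
                           even (height (take (Suc i) w))}"

end

theory Submission imports Defs begin
fun enc :: "ptree \<Rightarrow> bool list" where
  "enc (Node []) = []"
| "enc (Node (c # cs)) = True # concat (map (\<lambda>t. True # enc t @ [False]) cs) @ False # enc c"

definition encs :: "ptree list \<Rightarrow> bool list" where
  "encs cs = concat (map (\<lambda>t. True # enc t @ [False]) cs)"

lemma enc_cons: "enc (Node (c # cs)) = True # encs cs @ False # enc c"
  by (simp add: encs_def)
lemma encs_simps[simp]: "encs [] = []" "encs (t # ts) = True # enc t @ False # encs ts"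
  by (simp_all add: encs_def)
declare enc.simps(2)[simp del]

lemma height_simps[simp]: "height [] = 0" "height (x # w) = (if x then 1 else -1) + height w"
  "height (a @ b) = height a + height b"
  by (auto simp: height_def)

fun pos :: "int \<Rightarrow> bool list \<Rightarrow> bool" where
  "pos h [] = (0 \<le> h)"
| "pos h (x # w) = (0 \<le> h \<and> pos (if x then h + 1 else h - 1) w)"

lemma pos_ge: "pos h w \<Longrightarrow> 0 \<le> h"
  by (cases w) auto

lemma pos_append[simp]: "pos h (a @ b) = (pos h a \<and> pos (h + height a) b)"
  by (induction a arbitrary: h) (auto simp: algebra_simps dest: pos_ge)

lemma pos_take: "pos h w = (\<forall>j \<le> length w. 0 \<le> h + height (take j w))"
proof (induction w arbitrary: h)
  case Nil then show ?case by simp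
next
  case (Cons x w)
  show ?case
  proof
    assume a: "pos h (x # w)"
    show "\<forall>j \<le> length (x # w). 0 \<le> h + height (take j (x # w))"
    proof (intro allI impI)
      fix j assume "j \<le> length (x # w)"
      then show "0 \<le> h + height (take j (x # w))"
        using a Cons.IH by (cases j) (auto simp: algebra_simps split: if_splits)
    qed
  next
    assume a: "\<forall>j \<le> length (x # w). 0 \<le> h + height (take j (x # w))"
    have "0 \<le> h" using a[rule_format, of 0] by simp
    moreover have "\<forall>j \<le> length w. 0 \<le> (if x then h + 1 else h - 1) + height (take j w)"
    proof (intro allI impI)
      fix j assume "j \<le> length w"
      then show "0 \<le> (if x then h + 1 else h - 1) + height (take j w)"
        using a[rule_format, of "Suc j"] by (auto simp: algebra_simps)
    qed
    ultimately show "pos h (x # w)" using Cons.IH by simp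
  qed
qed

inductive bal :: "bool list \<Rightarrow> bool" where
  bal_nil: "bal []"
| bal_step: "bal x \<Longrightarrow> bal y \<Longrightarrow> bal (True # x @ False # y)"

lemma bal_pos: "bal w \<Longrightarrow> 0 \<le> h \<Longrightarrow> pos h w \<and> height w = 0"
  by (induction w arbitrary: h rule: bal.induct) auto

lemma bal_insert: "bal w \<Longrightarrow> w = xs @ ys \<Longrightarrow> bal (xs @ True # False # ys)"
proof (induction w arbitrary: xs ys rule: bal.induct)
  case bal_nil
  then show ?case using bal.intros by (metis append.left_neutral append_is_Nil_conv)
next
  case (bal_step x y)
  show ?case
  proof (cases xs)
    case Nil
    then show ?thesis using bal_step bal.intros by (metis append.left_neutral bal.bal_step)
  next
    case (Cons a xs')
    then have a: "a = True" and e: "xs' @ ys = x @ False # y" using bal_step.prems by auto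
    from e obtain m where "(xs' = x @ m \<and> m @ ys = False # y) \<or> (x = xs' @ m \<and> ys = m @ False # y)"
      by (auto simp: append_eq_append_conv2)
    then show ?thesis
    proof
      assume h: "xs' = x @ m \<and> m @ ys = False # y"
      show ?thesis
      proof (cases m)
        case Nil
        then have "bal (x @ [True, False])" using bal_step.IH(1)[of x "[]"] by simp
        then have "bal (True # (x @ [True, False]) @ False # y)" using bal_step.hyps bal.bal_step by blast
        then show ?thesis using h Nil Cons a by simp
      next
        case (Cons b m')
        then have "y = m' @ ys" "b = False" using h by auto
        then have "bal (m' @ True # False # ys)" using bal_step.IH(2) by blast
        then have "bal (True # x @ False # (m' @ True # False # ys))" using bal_step.hyps bal.bal_step by blast
        then show ?thesis using h Cons \<open>xs = a # xs'\<close> a \<open>b = False\<close> by simp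
      qed
    next
      assume h: "x = xs' @ m \<and> ys = m @ False # y"
      then have "bal (xs' @ True # False # m)" using bal_step.IH(1) by blast
      then have "bal (True # (xs' @ True # False # m) @ False # y)" using bal_step.hyps bal.bal_step by blast
      then show ?thesis using h Cons a by simp
    qed
  qed
qed

lemma pos_bal: "pos (int n) w \<Longrightarrow> int n + height w = 0 \<Longrightarrow> bal (replicate n True @ w)"
proof (induction w arbitrary: n)
  case Nil
  then show ?case by (simp add: bal_nil)
next
  case (Cons x w)
  show ?case
  proof (cases x)
    case True
    then have "bal (replicate (Suc n) True @ w)" using Cons by (intro Cons.IH) (auto simp: algebra_simps)
    then show ?thesis using True by (simp add: replicate_app_Cons_same)
  next
    case False
    then have p: "pos (int n - 1) w" using Cons.prems by simp
    then have "n \<ge> 1" using pos_ge by fastforce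
    then obtain m where m: "n = Suc m" by (cases n) auto
    have "bal (replicate m True @ w)" using Cons.prems p m False by (intro Cons.IH) auto
    then have "bal (replicate m True @ True # False # w)" using bal_insert by blast
    then show ?thesis using m False by (simp add: replicate_app_Cons_same)
  qed
qed

lemma dyck_bal: "dyck_path n w \<Longrightarrow> bal w"
  using pos_bal[of 0 w] by (simp add: dyck_path_def pos_take)

lemma bal_dyck: "bal w \<Longrightarrow> length w = 2 * n \<Longrightarrow> dyck_path n w"
  using bal_pos[of w 0] by (simp add: dyck_path_def pos_take)

lemma bal_unique:
  assumes "bal x" "bal x'" "x @ False # y = x' @ False # y'"
  shows "x = x' \<and> y = y'"
proof -
  have "\<not> length x < length x'" if b1: "bal x" and b2: "bal x'" and e: "x @ False # y = x' @ False # y'" for x x' y y'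
  proof
    assume l: "length x < length x'"
    have "take (Suc (length x)) x' = take (Suc (length x)) (x' @ False # y')" using l by simp
    also have "\<dots> = x @ [False]" using e[symmetric] by simp
    finally have t: "take (Suc (length x)) x' = x @ [False]" .
    have "pos 0 x'" using bal_pos[OF b2, of 0] by simp
    then have "pos 0 (take (Suc (length x)) x' @ drop (Suc (length x)) x')" by simp
    then show False using t bal_pos[OF b1, of 0] pos_ge[of "-1"] by (auto simp del: append_take_drop_id)
  qed
  then have "length x = length x'" using assms by (metis linorder_neqE_nat)
  then show ?thesis using assms by simp
qed

fun ep :: "int \<Rightarrow> bool list \<Rightarrow> nat" where
  "ep h [] = 0"
| "ep h (x # w) = (if x \<and> w \<noteq> [] \<and> \<not> hd w \<and> even (h + 1) then 1 else 0) + ep (if x then h + 1 else h - 1) w"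

lemma ep_card: "card {i. Suc i < length w \<and> w ! i \<and> \<not> w ! Suc i \<and> even (h + height (take (Suc i) w))} = ep h w"
proof (induction w arbitrary: h)
  case Nil then show ?case by simp
next
  case (Cons x w)
  let ?h = "if x then h + 1 else h - 1"
  let ?S = "{i. Suc i < length w \<and> w ! i \<and> \<not> w ! Suc i \<and> even (?h + height (take (Suc i) w))}"
  let ?c = "x \<and> w \<noteq> [] \<and> \<not> hd w \<and> even (h + 1)"
  have eq: "{i. Suc i < length (x # w) \<and> (x # w) ! i \<and> \<not> (x # w) ! Suc i \<and> even (h + height (take (Suc i) (x # w)))}
     = {i::nat. i = 0 \<and> ?c} \<union> Suc ` ?S"
  proof (rule set_eqI)
    fix i show "i \<in> {i. Suc i < length (x # w) \<and> (x # w) ! i \<and> \<not> (x # w) ! Suc i \<and> even (h + height (take (Suc i) (x # w)))}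
     \<longleftrightarrow> i \<in> {i::nat. i = 0 \<and> ?c} \<union> Suc ` ?S"
      by (cases i; cases w) (auto simp: algebra_simps)
  qed
  have "card ({i::nat. i = 0 \<and> ?c} \<union> Suc ` ?S) = card {i::nat. i = 0 \<and> ?c} + card (Suc ` ?S)"
  proof -
    have f: "finite (Suc ` ?S)" by (rule finite_imageI, rule finite_subset[of _ "{..<length w}"]) auto
    have f0: "finite {i::nat. i = 0 \<and> ?c}" by simp
    show ?thesis by (rule card_Un_disjoint[OF f0 f]) auto
  qed
  also have "card (Suc ` ?S) = card ?S" by (simp add: card_image)
  also have "card {i::nat. i = 0 \<and> ?c} = (if ?c then 1 else 0)" by auto
  finally show ?case using eq Cons.IH[of ?h] by simp
qed

lemma even_peaks_ep: "even_peaks w = ep 0 w"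
  using ep_card[of w 0] by (simp add: even_peaks_def)

lemma ep_append: "a = [] \<or> b = [] \<or> \<not> last a \<or> hd b \<Longrightarrow> ep h (a @ b) = ep h a + ep (h + height a) b"
proof (induction a arbitrary: h)
  case Nil then show ?case by simp
next
  case (Cons x a)
  show ?case
  proof (cases "a = []")
    case True
    then show ?thesis using Cons.prems by (cases b) (auto simp: algebra_simps)
  next
    case False
    then show ?thesis using Cons.prems Cons.IH by (auto simp: algebra_simps)
  qed
qed

lemma enc_props: "length (enc t) = 2 * edges t \<and> bal (enc t) \<and> (enc t = [] \<longleftrightarrow> is_leaf t)
   \<and> (enc t = [] \<or> hd (enc t)) \<and> (enc t = [] \<or> \<not> last (enc t))"
proof (induction t)
  case (Node cs)
  show ?case
  proof (cases cs)
    case Nil then show ?thesis by (simp add: bal_nil)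
  next
    case (Cons c cs')
    have ih: "\<And>t. t \<in> set cs' \<Longrightarrow> length (enc t) = 2 * edges t \<and> bal (enc t)" using Node.IH Cons by auto
    have ihc: "length (enc c) = 2 * edges c \<and> bal (enc c) \<and> (enc c = [] \<or> \<not> last (enc c))" using Node.IH Cons by auto
    have "(\<forall>t \<in> set ts. length (enc t) = 2 * edges t \<and> bal (enc t)) \<Longrightarrow>
       length (encs ts) = 2 * (\<Sum>c\<leftarrow>ts. Suc (edges c)) \<and> bal (encs ts) \<and> (encs ts = [] \<or> \<not> last (encs ts))" for ts
      by (induction ts) (auto simp: bal_nil intro: bal_step)
    then have "length (encs cs') = 2 * (\<Sum>c\<leftarrow>cs'. Suc (edges c)) \<and> bal (encs cs')" using ih by blast
    then show ?thesis using Cons ihc by (auto simp: enc_cons intro: bal_step)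
  qed
qed

lemma enc_ep: "even h \<Longrightarrow> ep h (enc t) = young_leaves t"
proof (induction t arbitrary: h)
  case (Node cs)
  show ?case
  proof (cases cs)
    case Nil then show ?thesis by simp
  next
    case (Cons c cs')
    have ih: "\<And>t h. t \<in> set cs' \<Longrightarrow> even h \<Longrightarrow> ep h (enc t) = young_leaves t" using Node.IH Cons by auto
    have ihc: "ep h (enc c) = young_leaves c" using Node.IH Cons Node.prems by auto
    have "(\<forall>t \<in> set ts. \<forall>h. even h \<longrightarrow> ep h (enc t) = young_leaves t) \<Longrightarrow> 
       ep (h + 1) (encs ts) = length (filter is_leaf ts) + (\<Sum>c\<leftarrow>ts. young_leaves c)" for ts
    proof (induction ts)
      case Nil then show ?case by simp
    next
      case (Cons t ts)
      have p: "enc t = [] \<or> \<not> last (enc t)" "enc t = [] \<longleftrightarrow> is_leaf t" "enc t = [] \<or> hd (enc t)" using enc_props by auto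
      have b: "bal (enc t)" using enc_props by auto
      have "ep (h + 1) (encs (t # ts)) = ep (h + 1) ((True # enc t @ [False]) @ encs ts)" by simp
      also have "\<dots> = ep (h + 1) (True # enc t @ [False]) + ep (h + 1) (encs ts)"
        using ep_append[of "True # enc t @ [False]" "encs ts" "h + 1"] bal_pos[OF b, of 0] by simp
      also have "ep (h + 1) (True # enc t @ [False]) = (if is_leaf t then 1 else 0) + ep (h + 2) (enc t @ [False])"
        using p Node.prems by (cases "enc t") (auto simp: algebra_simps)
      also have "ep (h + 2) (enc t @ [False]) = ep (h + 2) (enc t) + ep (h + 2 + height (enc t)) [False]"
        using p by (intro ep_append) auto
      also have "ep (h + 2) (enc t) = young_leaves t" using Cons.prems Node.prems by auto
      finally show ?case using Cons by simp
    qed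
    then have e1: "ep (h + 1) (encs cs') = length (filter is_leaf cs') + (\<Sum>c\<leftarrow>cs'. young_leaves c)"
      using ih by blast
    have ps: "encs ts = [] \<or> \<not> last (encs ts)" "encs ts = [] \<or> hd (encs ts)" for ts
      by (induction ts) auto
    have bs: "bal (encs ts)" for ts
      by (induction ts) (auto simp: bal_nil intro: bal_step enc_props[THEN conjunct2, THEN conjunct1])
    have "ep h (enc (Node cs)) = ep h (True # encs cs' @ False # enc c)" using Cons by (simp add: enc_cons)
    also have "\<dots> = ep (h + 1) (encs cs' @ False # enc c)" using Node.prems by simp
    also have "\<dots> = ep (h + 1) (encs cs') + ep (h + 1) (False # enc c)"
      using ep_append[of "encs cs'" "False # enc c" "h + 1"] ps bal_pos[OF bs, of 0] by auto
    also have "ep (h + 1) (False # enc c) = ep h (enc c)" by simp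
    finally have "ep h (enc (Node cs)) = length (filter is_leaf cs') + (\<Sum>c\<leftarrow>cs'. young_leaves c) + young_leaves c"
      using e1 ihc by simp
    moreover have "card {i. 1 \<le> i \<and> i < length cs \<and> is_leaf (cs ! i)} = length (filter is_leaf cs')"
    proof -
      have "{i. 1 \<le> i \<and> i < length cs \<and> is_leaf (cs ! i)} = Suc ` {i. i < length cs' \<and> is_leaf (cs' ! i)}"
        using Cons by (auto simp: image_iff Suc_le_eq gr0_conv_Suc)
      then show ?thesis by (simp add: card_image length_filter_conv_card)
    qed
    ultimately show ?thesis using Cons by simp
  qed
qed

lemma bal_encs: "bal (encs ts)"
  by (induction ts) (auto simp: bal_nil intro: bal_step enc_props[THEN conjunct2, THEN conjunct1])

lemma encs_inj: "(\<forall>t \<in> set xs. \<forall>t2. enc t = enc t2 \<longrightarrow> t = t2) \<Longrightarrow> encs xs = encs ys \<Longrightarrow> xs = ys"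
proof (induction xs arbitrary: ys)
  case Nil then show ?case by (cases ys) auto
next
  case (Cons x xs)
  then obtain y ys' where y: "ys = y # ys'" by (cases ys) auto
  have "enc x = enc y \<and> encs xs = encs ys'"
    using Cons.prems(2) y bal_unique[of "enc x" "enc y" "encs xs" "encs ys'"] enc_props by auto
  then show ?case using Cons y by auto
qed

lemma enc_inj: "enc t1 = enc t2 \<Longrightarrow> t1 = t2"
proof (induction t1 arbitrary: t2)
  case (Node cs)
  obtain cs2 where t2: "t2 = Node cs2" by (cases t2) auto
  show ?case
  proof (cases cs)
    case Nil
    then show ?thesis using Node.prems t2 by (cases cs2) (auto simp: enc_cons)
  next
    case (Cons c cs')
    then obtain c2 cs2' where c2: "cs2 = c2 # cs2'" using Node.prems t2 by (cases cs2) (auto simp: enc_cons)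
    have "encs cs' = encs cs2' \<and> enc c = enc c2"
      using Node.prems t2 c2 Cons bal_unique[of "encs cs'" "encs cs2'" "enc c" "enc c2"] bal_encs
      by (auto simp: enc_cons)
    moreover have "\<forall>t \<in> set cs'. \<forall>t2. enc t = enc t2 \<longrightarrow> t = t2" using Node.IH Cons by auto
    ultimately show ?thesis using Node.IH Cons c2 t2 encs_inj by auto
  qed
qed

lemma bal_surj: "bal w \<Longrightarrow> (\<exists>t. enc t = w) \<and> (\<exists>cs. encs cs = w)"
proof (induction rule: bal.induct)
  case bal_nil
  have "enc (Node []) = []" by simp
  moreover have "encs [] = []" by simp
  ultimately show ?case by blast
next
  case (bal_step x y)
  then obtain tx csx ty csy where "enc tx = x" "encs csx = x" "enc ty = y" "encs csy = y" by blast
  then have "enc (Node (ty # csx)) = True # x @ False # y" "encs (tx # csy) = True # x @ False # y"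
    by (auto simp: enc_cons)
  then show ?case by blast
qed

theorem mainTheorem7:
  fixes n k :: nat
  assumes "n \<ge> 1"
  shows "card {t. edges t = n \<and> young_leaves t = k}
       = card {w. dyck_path n w \<and> even_peaks w = k}"
proof (rule bij_betw_same_card[of enc])
  show "bij_betw enc {t. edges t = n \<and> young_leaves t = k} {w. dyck_path n w \<and> even_peaks w = k}"
  proof (rule bij_betw_imageI)
    show "inj_on enc {t. edges t = n \<and> young_leaves t = k}" by (auto intro: inj_onI enc_inj)
    show "enc ` {t. edges t = n \<and> young_leaves t = k} = {w. dyck_path n w \<and> even_peaks w = k}"
    proof (rule set_eqI, rule iffI)
      fix w assume "w \<in> enc ` {t. edges t = n \<and> young_leaves t = k}"
      then obtain t where t: "w = enc t" "edges t = n" "young_leaves t = k" by auto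
      then show "w \<in> {w. dyck_path n w \<and> even_peaks w = k}"
        using enc_props[of t] bal_dyck[of w n] enc_ep[of 0 t] by (auto simp: even_peaks_ep)
    next
      fix w assume "w \<in> {w. dyck_path n w \<and> even_peaks w = k}"
      then have d: "dyck_path n w" "even_peaks w = k" by auto
      then obtain t where t: "enc t = w" using dyck_bal bal_surj by blast
      have "edges t = n" using enc_props[of t] t d by (simp add: dyck_path_def)
      moreover have "young_leaves t = k" using enc_ep[of 0 t] t d by (simp add: even_peaks_ep)
      ultimately show "w \<in> enc ` {t. edges t = n \<and> young_leaves t = k}" using t by auto
    qed
  qed
qed

end
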